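(* Let $\gamma\ge 2$ be an integer, $\delta>0$, and let $\mu$ range over an arbitrary parameter set. Let $F(\rho,\mu)$ be complex valued with $F(\cdot,\mu)\in C^{\gamma+1}([0,\delta))$ for each $\mu$, and set $a_j(\mu)=\partial_\rho^jF(0,\mu)/j!$. Assume (F1) $a_0(\mu)=a_1(\mu)=0$ for all $\mu$; (F2) there is $C>0$ with $\sum_{j=2}^{\gamma}|a_j(\mu)|\ge C$ for all $\mu$; (F3) for each $\mu$, $|\partial_\rho F(\rho,\mu)|$ is increasing in $\rho$ for $0<\rho<\delta$; (F4) for each $k\le\gamma+1$, $\partial_\rho^kF(\rho,\mu)$ is bounded uniformly in $0<\rho<\delta$ and $\mu$. Then, provided $\delta$ is sufficiently small (depending only on $\gamma$ and the constants in (F2), (F4)), there exist constants $C>0$ and $C_m>0$ such that for all $0<\rho<\delta$, all $\mu$, and all integers $1\le m\le\gamma+1$, $$|\partial_\rho F(\rho,\mu)|\ge C\rho^{\gamma-1}\qquad\text{and}\qquad |\partial_\rho^mF(\rho,\mu)|\le C_m\rho^{1-m}|\partial_\rho F(\rho,\mu)|.$$ *)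

theory Defs
  imports "HOL-Analysis.Analysis"
begin

definition C_derivs :: "nat \<Rightarrow> (real \<Rightarrow> complex) \<Rightarrow> (nat \<Rightarrow> real \<Rightarrow> complex) \<Rightarrow> real set \<Rightarrow> bool" where
  "C_derivs n f Df S \<longleftrightarrow>
     (\<forall>x\<in>S. Df 0 x = f x) \<and>
     (\<forall>k<n. \<forall>x\<in>S. (Df k has_vector_derivative Df (Suc k) x) (at x within S)) \<and>
     continuous_on S (Df n)"

end

theory Submission
  imports Defs "HOL-Computational_Algebra.Polynomial"
begin

lemma lagrange_bound:
  fixes z :: "nat \<Rightarrow> complex" and n :: nat
  assumes inj: "inj_on z {..n}"
  shows "\<exists>K>0. \<forall>c. (\<Sum>i\<le>n. norm (c i)) \<le> K * (\<Sum>l\<le>n. norm (\<Sum>i\<le>n. c i * z l ^ i))"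
proof -
  define L where "L l = (\<Prod>j\<in>{..n}-{l}. smult (1/(z l - z j)) [:- z j, 1:])" for l
  have polyL: "poly (L l) (z k) = (if k = l then 1 else 0)" if "k \<le> n" "l \<le> n" for k l
  proof (cases "k = l")
    case True
    have "\<And>j. j \<in> {..n}-{l} \<Longrightarrow> z l \<noteq> z j" using inj that True by (auto dest: inj_onD)
    then show ?thesis using True
      by (simp add: L_def poly_prod, intro prod.neutral) (simp add: diff_divide_distrib[symmetric])
  next
    case False
    have "(\<Prod>j\<in>{..n}-{l}. poly (smult (1/(z l - z j)) [:- z j, 1:]) (z k)) = 0"
      using that False by (intro prod_zero) (auto intro!: bexI[of _ k])
    then show ?thesis using False by (simp add: L_def poly_prod)
  qed
  have degL: "degree (L l) \<le> n" if "l \<le> n" for l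
  proof -
    have "degree (L l) \<le> (\<Sum>j\<in>{..n}-{l}. degree (smult (1/(z l - z j)) [:- z j, 1:]))"
      unfolding L_def using degree_prod_sum_le[of "{..n}-{l}" "\<lambda>j. smult (1/(z l - z j)) [:- z j, 1:]"]
      by (simp add: o_def)
    also have "\<dots> \<le> (\<Sum>j\<in>{..n}-{l}. 1)" by (intro sum_mono) auto
    also have "\<dots> = n" using that by simp
    finally show ?thesis .
  qed
  define B where "B = (\<Sum>i\<le>n. \<Sum>l\<le>n. norm (coeff (L l) i))"
  have B0: "B \<ge> 0" unfolding B_def by (intro sum_nonneg) auto
  show ?thesis
  proof (intro exI[of _ "B + 1"] conjI allI)
    show "B + 1 > 0" using B0 by simp
    fix c :: "nat \<Rightarrow> complex"
    define P where "P = (\<Sum>i\<le>n. monom (c i) i)"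
    define V where "V = (\<Sum>l\<le>n. norm (\<Sum>i\<le>n. c i * z l ^ i))"
    have V0: "V \<ge> 0" unfolding V_def by (intro sum_nonneg) auto
    have polyP: "poly P x = (\<Sum>i\<le>n. c i * x ^ i)" for x
      by (simp add: P_def poly_sum poly_monom)
    have degP: "degree P \<le> n" unfolding P_def
      by (intro degree_sum_le) (auto simp: degree_monom_le intro: order.trans[OF degree_monom_le])
    define Q where "Q = (\<Sum>l\<le>n. smult (poly P (z l)) (L l))"
    have degQ: "degree Q \<le> n" unfolding Q_def
      by (intro degree_sum_le) (auto intro: order.trans[OF degree_smult_le] degL)
    have "poly Q (z k) = poly P (z k)" if "k \<le> n" for k
    proof -
      have "poly Q (z k) = (\<Sum>l\<le>n. poly P (z l) * (if k = l then 1 else 0))"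
        unfolding Q_def poly_sum using that by (intro sum.cong) (auto simp: polyL)
      also have "\<dots> = poly P (z k)" using that by (simp add: if_distrib cong: if_cong)
      finally show ?thesis .
    qed
    moreover have "card (z ` {..n}) = Suc n" using inj by (simp add: card_image)
    ultimately have PQ: "P = Q" using degP degQ
      by (intro poly_eqI_degree[where A = "z ` {..n}"]) auto
    have "norm (c i) \<le> V * (\<Sum>l\<le>n. norm (coeff (L l) i))" if "i \<le> n" for i
    proof -
      have "c i = coeff P i" using that by (simp add: P_def coeff_sum)
      also have "\<dots> = coeff Q i" by (simp only: PQ)
      also have "\<dots> = (\<Sum>l\<le>n. poly P (z l) * coeff (L l) i)" by (simp add: Q_def coeff_sum)
      finally have "norm (c i) \<le> (\<Sum>l\<le>n. norm (poly P (z l)) * norm (coeff (L l) i))"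
        by (metis (no_types, lifting) norm_mult norm_sum sum.cong)
      also have "\<dots> \<le> (\<Sum>l\<le>n. V * norm (coeff (L l) i))"
      proof (intro sum_mono mult_right_mono)
        fix l assume "l \<in> {..n}"
        then show "norm (poly P (z l)) \<le> V" unfolding V_def polyP
          by (intro member_le_sum) auto
      qed auto
      finally show ?thesis by (simp add: sum_distrib_left)
    qed
    then have "(\<Sum>i\<le>n. norm (c i)) \<le> (\<Sum>i\<le>n. V * (\<Sum>l\<le>n. norm (coeff (L l) i)))"
      by (intro sum_mono) auto
    also have "\<dots> = V * B" by (simp add: B_def sum_distrib_left)
    also have "\<dots> \<le> (B + 1) * V" using V0 by (simp add: algebra_simps)
    finally show "(\<Sum>i\<le>n. norm (c i)) \<le> (B + 1) * (\<Sum>l\<le>n. norm (\<Sum>i\<le>n. c i * z l ^ i))"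
      by (simp add: V_def)
  qed
qed


lemma taylor_poly_deriv:
  fixes c :: "nat \<Rightarrow> complex"
  shows "((\<lambda>t. \<Sum>j<Suc n. (t^j / fact j) *\<^sub>R c j) has_vector_derivative
           (\<Sum>j<n. (t^j / fact j) *\<^sub>R c (Suc j))) (at t within S)"
proof (induction n)
  case 0
  then show ?case by (simp add: has_vector_derivative_const)
next
  case (Suc n)
  have d: "((\<lambda>t. (t^Suc n / fact (Suc n)) *\<^sub>R c (Suc n)) has_vector_derivative
      (t^n / fact n) *\<^sub>R c (Suc n)) (at t within S)"
  proof -
    have "((\<lambda>t. t^Suc n / fact (Suc n)) has_field_derivative (t^n / fact n)) (at t within S)"
    proof -
      have "((\<lambda>t. t^Suc n) has_field_derivative (real (Suc n) * t^n)) (at t within S)"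
        using DERIV_pow[of "Suc n" t] by (simp add: has_field_derivative_at_within)
      from DERIV_cdivide[OF this, of "fact (Suc n)"]
      have "((\<lambda>t. t^Suc n / fact (Suc n)) has_field_derivative (real (Suc n) * t^n / fact (Suc n))) (at t within S)" .
      moreover have "real (Suc n) * t^n / fact (Suc n) = t^n / fact n"
        by (simp add: fact_Suc del: of_nat_Suc)
      ultimately show ?thesis by simp
    qed
    then show ?thesis
      using has_vector_derivative_scaleR[OF _ has_vector_derivative_const[of "c (Suc n)"]]
      by simp
  qed
  show ?case
    using has_vector_derivative_add[OF Suc d] by (simp add: add.commute)
qed

lemma taylor_bound:
  fixes D :: "nat \<Rightarrow> real \<Rightarrow> complex"
  assumes C: "C_derivs N f D {0..<\<delta>}"
    and bnd: "\<forall>t\<in>{0<..<\<delta>}. norm (D N t) \<le> M" and M0: "M \<ge> 0"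
    and k: "k \<le> N" and rho: "\<rho> \<in> {0<..<\<delta>}"
  shows "norm (D k \<rho> - (\<Sum>j<N-k. (\<rho>^j/fact j) *\<^sub>R D (k+j) 0)) \<le> M * \<rho>^(N-k)"
proof -
  have der: "\<And>k x. k < N \<Longrightarrow> x \<in> {0..<\<delta>} \<Longrightarrow> (D k has_vector_derivative D (Suc k) x) (at x within {0..<\<delta>})"
    using C unfolding C_derivs_def by blast
  have "\<forall>\<rho>\<in>{0<..<\<delta>}. norm (D (N-i) \<rho> - (\<Sum>j<N-(N-i). (\<rho>^j/fact j) *\<^sub>R D ((N-i)+j) 0)) \<le> M * \<rho>^(N-(N-i))"
    if "i \<le> N" for i
    using that
  proof (induction i)
    case 0
    then show ?case using bnd by simp
  next
    case (Suc i)
    define k where "k = N - Suc i"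
    have kN: "k < N" and k1: "N - i = Suc k" and nk: "N - k = Suc i" using Suc.prems by (auto simp: k_def)
    have IH: "\<forall>\<rho>\<in>{0<..<\<delta>}. norm (D (Suc k) \<rho> - (\<Sum>j<i. (\<rho>^j/fact j) *\<^sub>R D (Suc k + j) 0)) \<le> M * \<rho>^i"
    proof -
      have "N - Suc k = i" using k1 by simp
      then show ?thesis using Suc.IH Suc.prems k1 by simp
    qed
    define g where "g t = D k t - (\<Sum>j<Suc i. (t^j/fact j) *\<^sub>R D (k+j) 0)" for t
    define g' where "g' t = D (Suc k) t - (\<Sum>j<i. (t^j/fact j) *\<^sub>R D (Suc k + j) 0)" for t
    have gder: "(g has_vector_derivative g' x) (at x within {0..<\<delta>})" if "x \<in> {0..<\<delta>}" for x
      unfolding g_def g'_def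
      using has_vector_derivative_diff[OF der[OF kN that] taylor_poly_deriv[where n=i and c="\<lambda>j. D (k+j) 0" and t=x and S="{0..<\<delta>}"]]
      by simp
    have g0: "g 0 = 0" by (simp add: g_def lessThan_Suc_eq_insert_0 zero_power sum.reindex)
    show ?case unfolding k_def[symmetric] nk
    proof
      fix \<rho> assume r: "\<rho> \<in> {0<..<\<delta>}"
      have cont: "continuous_on {0..<\<delta>} g"
        using gder by (meson continuous_on_eq_continuous_within has_vector_derivative_continuous)
      have "\<exists>x\<in>{0<..<\<rho>}. norm (g \<rho> - g 0) \<le> norm ((\<lambda>h. h *\<^sub>R g' x) (\<rho> - 0))"
      proof (rule mvt_general)
        show "0 < \<rho>" using r by simp
        show "continuous_on {0..\<rho>} g" using r by (intro continuous_on_subset[OF cont]) auto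
        fix x assume x: "0 < x" "x < \<rho>"
        then have "x \<in> {0<..<\<delta>}" using r by auto
        have xin: "x \<in> {0..<\<delta>}" using \<open>x \<in> {0<..<\<delta>}\<close> by simp
        have "(g has_vector_derivative g' x) (at x within {0<..<\<delta>})"
          by (rule has_vector_derivative_within_subset[OF gder[OF xin]]) auto
        then have "(g has_vector_derivative g' x) (at x)"
          by (simp only: at_within_open[OF \<open>x \<in> {0<..<\<delta>}\<close> open_greaterThanLessThan])
        then show "(g has_derivative (\<lambda>h. h *\<^sub>R g' x)) (at x)"
          by (simp add: has_vector_derivative_def)
      qed
      then obtain x where x: "x \<in> {0<..<\<rho>}" and xb: "norm (g \<rho>) \<le> \<rho> * norm (g' x)"
        using r g0 by auto
      have "norm (g' x) \<le> M * x^i" using IH x r unfolding g'_def by auto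
      also have "\<dots> \<le> M * \<rho>^i" using x M0 by (intro mult_left_mono power_mono) auto
      finally have "norm (g \<rho>) \<le> \<rho> * (M * \<rho>^i)"
        using xb r by (meson less_eq_real_def greaterThanLessThan_iff mult_left_mono order_trans)
      then show "norm (D k \<rho> - (\<Sum>j<Suc i. (\<rho>^j/fact j) *\<^sub>R D (k+j) 0)) \<le> M * \<rho>^Suc i"
        by (simp add: g_def algebra_simps)
    qed
  qed
  from this[of "N - k"] k rho show ?thesis by simp
qed


theorem mainTheorem2:
  fixes \<gamma> :: nat and C0 M :: real
  assumes "\<gamma> \<ge> 2" and "C0 > 0"
  shows "\<exists>\<delta>0>0. \<forall>\<delta> (F :: real \<Rightarrow> 'm \<Rightarrow> complex) (D :: nat \<Rightarrow> real \<Rightarrow> 'm \<Rightarrow> complex).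
     0 < \<delta> \<and> \<delta> \<le> \<delta>0
     \<and> (\<forall>\<mu>. C_derivs (\<gamma> + 1) (\<lambda>\<rho>. F \<rho> \<mu>) (\<lambda>k \<rho>. D k \<rho> \<mu>) {0..<\<delta>})
     \<and> (\<forall>\<mu>. D 0 0 \<mu> = 0 \<and> D 1 0 \<mu> = 0)
     \<and> (\<forall>\<mu>. (\<Sum>j=2..\<gamma>. norm (D j 0 \<mu> / of_real (fact j))) \<ge> C0)
     \<and> (\<forall>\<mu>. mono_on {0<..<\<delta>} (\<lambda>\<rho>. norm (D 1 \<rho> \<mu>)))
     \<and> (\<forall>k\<le>\<gamma>+1. \<forall>\<rho>\<in>{0<..<\<delta>}. \<forall>\<mu>. norm (D k \<rho> \<mu>) \<le> M)
     \<longrightarrow> (\<exists>C>0. \<exists>Cm :: nat \<Rightarrow> real. (\<forall>m. Cm m > 0) \<and>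
           (\<forall>\<rho>\<in>{0<..<\<delta>}. \<forall>\<mu>.
              norm (D 1 \<rho> \<mu>) \<ge> C * \<rho> ^ (\<gamma> - 1) \<and>
              (\<forall>m. 1 \<le> m \<and> m \<le> \<gamma> + 1 \<longrightarrow>
                 norm (D m \<rho> \<mu>) \<le> Cm m * \<rho> powr (1 - real m) * norm (D 1 \<rho> \<mu>))))"
proof -
  define n where "n = \<gamma> - 1"
  have gn: "\<gamma> = Suc n" using assms(1) by (simp add: n_def)
  define z where "z l = complex_of_real (real (Suc l) / real (Suc n))" for l
  have inj: "inj_on z {..n}"
  proof (rule inj_onI)
    fix a b assume "z a = z b"
    then have "real (Suc a) / real (Suc n) = real (Suc b) / real (Suc n)"
      unfolding z_def of_real_eq_iff .
    then have "real (Suc a) = real (Suc b)"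
      by (simp only: divide_cancel_right) simp
    then show "a = b" by simp
  qed
  obtain K where K: "K > 0" "\<forall>c. (\<Sum>i\<le>n. norm (c i)) \<le> K * (\<Sum>l\<le>n. norm (\<Sum>i\<le>n. c i * z l ^ i))"
    using lagrange_bound[OF inj] by blast
  define A where "A = K * real (Suc n)"
  have A0: "A > 0" using K by (simp add: A_def)
  define \<delta>0 where "\<delta>0 = min 1 (C0 / (2 * A * (\<bar>M\<bar> + 1)))"
  have d0: "\<delta>0 > 0" using A0 assms(2) by (simp add: \<delta>0_def)
  show ?thesis
  proof (rule exI[of _ \<delta>0], intro conjI allI impI d0)
    fix \<delta> and F :: "real \<Rightarrow> 'm \<Rightarrow> complex" and D :: "nat \<Rightarrow> real \<Rightarrow> 'm \<Rightarrow> complex"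
    assume H: "0 < \<delta> \<and> \<delta> \<le> \<delta>0
     \<and> (\<forall>\<mu>. C_derivs (\<gamma> + 1) (\<lambda>\<rho>. F \<rho> \<mu>) (\<lambda>k \<rho>. D k \<rho> \<mu>) {0..<\<delta>})
     \<and> (\<forall>\<mu>. D 0 0 \<mu> = 0 \<and> D 1 0 \<mu> = 0)
     \<and> (\<forall>\<mu>. (\<Sum>j=2..\<gamma>. norm (D j 0 \<mu> / of_real (fact j))) \<ge> C0)
     \<and> (\<forall>\<mu>. mono_on {0<..<\<delta>} (\<lambda>\<rho>. norm (D 1 \<rho> \<mu>)))
     \<and> (\<forall>k\<le>\<gamma>+1. \<forall>\<rho>\<in>{0<..<\<delta>}. \<forall>\<mu>. norm (D k \<rho> \<mu>) \<le> M)"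
    have dpos: "0 < \<delta>" and dle: "\<delta> \<le> \<delta>0"
      and Cd: "\<And>\<mu>. C_derivs (\<gamma> + 1) (\<lambda>\<rho>. F \<rho> \<mu>) (\<lambda>k \<rho>. D k \<rho> \<mu>) {0..<\<delta>}"
      and sumC: "\<And>\<mu>. (\<Sum>j=2..\<gamma>. norm (D j 0 \<mu> / of_real (fact j))) \<ge> C0"
      and mono: "\<And>\<mu>. mono_on {0<..<\<delta>} (\<lambda>\<rho>. norm (D 1 \<rho> \<mu>))"
      and bnd: "\<And>k \<rho> \<mu>. k\<le>\<gamma>+1 \<Longrightarrow> \<rho>\<in>{0<..<\<delta>} \<Longrightarrow> norm (D k \<rho> \<mu>) \<le> M"
      using H by auto
    have M0: "M \<ge> 0"
    proof -
      have "norm (D 1 (\<delta>/2) undefined) \<le> M" using dpos by (intro bnd) auto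
      then show ?thesis by (meson norm_ge_zero order_trans)
    qed
    have d1: "\<delta> \<le> 1" and d2: "\<delta> \<le> C0 / (2 * A * (\<bar>M\<bar> + 1))" using dle by (auto simp: \<delta>0_def)
    define Cm :: real where "Cm = 2 * fact \<gamma> * A + 1"
    have Cm0: "Cm > 0" using A0 by (simp add: Cm_def add_pos_nonneg)
    show "\<exists>C>0. \<exists>Cm :: nat \<Rightarrow> real. (\<forall>m. Cm m > 0) \<and>
           (\<forall>\<rho>\<in>{0<..<\<delta>}. \<forall>\<mu>.
              norm (D 1 \<rho> \<mu>) \<ge> C * \<rho> ^ (\<gamma> - 1) \<and>
              (\<forall>m. 1 \<le> m \<and> m \<le> \<gamma> + 1 \<longrightarrow>
                 norm (D m \<rho> \<mu>) \<le> Cm m * \<rho> powr (1 - real m) * norm (D 1 \<rho> \<mu>)))"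
    proof (intro exI[of _ "C0 / (2 * A)"] conjI exI[of _ "\<lambda>_. Cm"] allI ballI impI)
      show "C0 / (2 * A) > 0" using assms(2) A0 by simp
      show "\<And>m. Cm > 0" using Cm0 .
      fix \<rho> \<mu> assume r: "\<rho> \<in> {0<..<\<delta>}"
      have r0: "0 < \<rho>" and rd: "\<rho> < \<delta>" and r1: "\<rho> \<le> 1" using r d1 by auto
      have tay: "norm (D k t \<mu> - (\<Sum>j<\<gamma>+1-k. (t^j/fact j) *\<^sub>R D (k+j) 0 \<mu>)) \<le> M * t^(\<gamma>+1-k)"
        if "k \<le> \<gamma>+1" "t \<in> {0<..<\<delta>}" for k t
        using taylor_bound[OF Cd[of \<mu>], of M k t] bnd[of "\<gamma>+1" _ \<mu>] M0 that by auto
      define e where "e i = D (Suc i) 0 \<mu> / of_real (fact i)" for i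
      define S where "S = (\<Sum>i\<le>n. norm (e i) * \<rho>^i)"
      define N1 where "N1 = norm (D 1 \<rho> \<mu>)"
      have T1: "(\<Sum>j<\<gamma>+1-1. (t^j/fact j) *\<^sub>R D (1+j) 0 \<mu>) = (\<Sum>i\<le>n. e i * of_real t ^ i)" for t
        unfolding gn by (auto simp: e_def lessThan_Suc_atMost scaleR_conv_of_real intro!: sum.cong)
      have Sb: "S \<le> A * (N1 + M * \<rho>^\<gamma>)"
      proof -
        have "S = (\<Sum>i\<le>n. norm (e i * of_real (\<rho>^i)))"
          unfolding S_def using r0 by (simp add: norm_mult norm_power)
        also have "\<dots> \<le> K * (\<Sum>l\<le>n. norm (\<Sum>i\<le>n. (e i * of_real (\<rho>^i)) * z l ^ i))"
          using spec[OF K(2), of "\<lambda>i. e i * complex_of_real (\<rho>^i)"] by simp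
        also have "\<dots> \<le> K * (\<Sum>l\<le>n. N1 + M * \<rho>^\<gamma>)"
        proof (intro mult_left_mono sum_mono)
          fix l assume l: "l \<in> {..n}"
          define t where "t = \<rho> * (real (Suc l) / real (Suc n))"
          have t0: "0 < t" using r0 by (simp add: t_def)
          have tr: "t \<le> \<rho>" using r0 l by (auto simp: t_def field_simps)
          have tin: "t \<in> {0<..<\<delta>}" using t0 tr rd by auto
          have "(\<Sum>i\<le>n. (e i * of_real (\<rho>^i)) * z l ^ i) = (\<Sum>i\<le>n. e i * of_real t ^ i)"
            by (auto simp: t_def z_def power_mult_distrib[symmetric] times_divide_eq_right intro!: sum.cong)
          also have "\<dots> = (\<Sum>j<\<gamma>+1-1. (t^j/fact j) *\<^sub>R D (1+j) 0 \<mu>)" using T1 by simp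
          finally have eq: "(\<Sum>i\<le>n. (e i * of_real (\<rho>^i)) * z l ^ i) = (\<Sum>j<\<gamma>+1-1. (t^j/fact j) *\<^sub>R D (1+j) 0 \<mu>)" .
          have "norm (\<Sum>j<\<gamma>+1-1. (t^j/fact j) *\<^sub>R D (1+j) 0 \<mu>) \<le> norm (D 1 t \<mu>) + M * t^\<gamma>"
            using tay[of 1 t] tin norm_triangle_sub[of "\<Sum>j<\<gamma>+1-1. (t^j/fact j) *\<^sub>R D (1+j) 0 \<mu>" "D 1 t \<mu>"]
            by (simp add: norm_minus_commute)
          also have "\<dots> \<le> N1 + M * \<rho>^\<gamma>"
          proof (intro add_mono mult_left_mono power_mono)
            show "norm (D 1 t \<mu>) \<le> N1" unfolding N1_def
              using mono_onD[OF mono[of \<mu>] tin r tr] .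
          qed (use t0 tr M0 in auto)
          finally show "norm (\<Sum>i\<le>n. (e i * of_real (\<rho>^i)) * z l ^ i) \<le> N1 + M * \<rho>^\<gamma>"
            using eq by simp
        qed (use K in auto)
        also have "\<dots> = A * (N1 + M * \<rho>^\<gamma>)" by (simp add: A_def)
        finally show ?thesis .
      qed
      have Sc: "C0 * \<rho>^n \<le> S"
      proof -
        have "(\<Sum>j=2..\<gamma>. norm (D j 0 \<mu> / of_real (fact j))) = (\<Sum>i=1..n. norm (D (Suc i) 0 \<mu> / of_real (fact (Suc i))))"
          unfolding gn numeral_2_eq_2 One_nat_def by (rule sum.shift_bounds_cl_Suc_ivl)
        also have "\<dots> \<le> (\<Sum>i=1..n. norm (e i))"
        proof (intro sum_mono)
          fix i
          have "fact i \<le> (fact (Suc i) :: real)" by (rule fact_mono) auto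
          then show "norm (D (Suc i) 0 \<mu> / of_real (fact (Suc i))) \<le> norm (e i)"
            unfolding e_def norm_divide norm_of_real abs_of_nonneg[OF fact_ge_zero]
            by (intro divide_left_mono) (auto simp del: fact_Suc)
        qed
        also have "\<dots> \<le> (\<Sum>i\<le>n. norm (e i))" by (intro sum_mono2) auto
        finally have "C0 \<le> (\<Sum>i\<le>n. norm (e i))" using sumC[of \<mu>] by linarith
        then have "C0 * \<rho>^n \<le> (\<Sum>i\<le>n. norm (e i)) * \<rho>^n" using r0 by (intro mult_right_mono) auto
        also have "\<dots> = (\<Sum>i\<le>n. norm (e i) * \<rho>^n)" by (simp add: sum_distrib_right)
        also have "\<dots> \<le> S" unfolding S_def
          by (intro sum_mono mult_left_mono power_decreasing) (use r0 r1 in auto)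
        finally show ?thesis .
      qed
      have Sd: "A * M * \<rho>^\<gamma> \<le> C0 / 2 * \<rho>^n"
      proof -
        have "A * M * \<rho> \<le> A * \<bar>M\<bar> * (C0 / (2 * A * (\<bar>M\<bar> + 1)))"
          using A0 M0 r0 rd d2 by (intro mult_mono) auto
        also have "\<dots> = C0 / 2 * (\<bar>M\<bar> / (\<bar>M\<bar> + 1))"
        proof -
          have nz: "\<bar>M\<bar> + 1 \<noteq> 0" using abs_ge_zero[of M] by linarith
          have "A * \<bar>M\<bar> * (C0 / (2 * A * (\<bar>M\<bar> + 1))) = (A / A) * (C0 / 2 * (\<bar>M\<bar> / (\<bar>M\<bar> + 1)))"
            by (simp add: divide_simps)
          then show ?thesis using A0 by simp
        qed
        also have "\<dots> \<le> C0 / 2" using assms(2) by (intro mult_left_le) auto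
        finally have "A * M * \<rho> * \<rho>^n \<le> C0 / 2 * \<rho>^n" using r0 by (intro mult_right_mono) auto
        then show ?thesis by (simp add: gn mult.assoc mult.left_commute)
      qed
      have low: "C0 / 2 * \<rho>^n \<le> A * N1" using Sb Sc Sd by (simp add: algebra_simps)
      show "norm (D 1 \<rho> \<mu>) \<ge> C0 / (2 * A) * \<rho> ^ (\<gamma> - 1)"
        using low A0 unfolding N1_def by (simp add: gn field_simps)
      have MN: "M * \<rho>^\<gamma> \<le> N1" using low Sd A0
        by (smt (verit, ccfv_SIG) mult.assoc mult_le_cancel_left_pos)
      fix m assume m: "1 \<le> m \<and> m \<le> \<gamma> + 1"
      have "\<rho>^(m-1) * norm (D m \<rho> \<mu>) \<le> fact \<gamma> * S + M * \<rho>^\<gamma>"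
      proof -
        let ?T = "\<Sum>j<\<gamma>+1-m. (\<rho>^j/fact j) *\<^sub>R D (m+j) 0 \<mu>"
        have that': "norm (D m \<rho> \<mu>) \<le> norm ?T + M * \<rho>^(\<gamma>+1-m)"
          using tay[of m \<rho>] m r norm_triangle_sub[of "D m \<rho> \<mu>" ?T] by simp
        then have "\<rho>^(m-1) * norm (D m \<rho> \<mu>) \<le> \<rho>^(m-1) * norm ?T + M * (\<rho>^(m-1) * \<rho>^(\<gamma>+1-m))"
        proof -
          have p: "\<rho>^(m-1) \<ge> 0" using r0 by simp
          from mult_left_mono[OF that' p] show ?thesis by (simp add: distrib_left mult.left_commute)
        qed
        also have "\<rho>^(m-1) * \<rho>^(\<gamma>+1-m) = \<rho>^\<gamma>" using m by (simp add: power_add[symmetric])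
        also have "\<rho>^(m-1) * norm ?T \<le> fact \<gamma> * S"
        proof -
          define h where "h i = fact \<gamma> * (norm (e i) * \<rho>^i)" for i
          have "\<rho>^(m-1) * norm ?T \<le> \<rho>^(m-1) * (\<Sum>j<\<gamma>+1-m. norm ((\<rho>^j/fact j) *\<^sub>R D (m+j) 0 \<mu>))"
            using r0 by (intro mult_left_mono norm_sum) auto
          also have "\<dots> = (\<Sum>j<\<gamma>+1-m. \<rho>^(m-1) * (\<rho>^j/fact j) * norm (D (m+j) 0 \<mu>))"
            using r0 by (simp add: sum_distrib_left mult.assoc)
          also have "\<dots> \<le> (\<Sum>j<\<gamma>+1-m. h (m - 1 + j))"
          proof (intro sum_mono)
            fix j assume j: "j \<in> {..<\<gamma>+1-m}"
            define i where "i = m - 1 + j"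
            have mi: "m + j = Suc i" and ig: "i \<le> \<gamma>" using m j by (auto simp: i_def)
            have De: "norm (D (m+j) 0 \<mu>) = norm (e i) * fact i"
              unfolding mi e_def by (simp add: norm_divide)
            have fi: "fact i \<le> (fact \<gamma> :: real)" using ig by (rule fact_mono)
            have "\<rho>^(m-1) * (\<rho>^j/fact j) * norm (D (m+j) 0 \<mu>) = (norm (e i) * \<rho>^i) * (fact i / fact j)"
              unfolding De i_def by (simp add: power_add field_simps)
            also have "\<dots> \<le> (norm (e i) * \<rho>^i) * fact \<gamma>"
            proof (intro mult_left_mono)
              have "fact i / fact j \<le> (fact i :: real)"
                using divide_left_mono[of 1 "fact j" "fact i :: real"] fact_ge_1[of j, where 'a=real]
                by simp
              then show "fact i / fact j \<le> (fact \<gamma> :: real)" using fi by linarith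
            qed (use r0 in auto)
            finally show "\<rho>^(m-1) * (\<rho>^j/fact j) * norm (D (m+j) 0 \<mu>) \<le> h (m - 1 + j)"
              by (simp add: h_def i_def mult.commute)
          qed
          also have "\<dots> = sum h ((\<lambda>j. m - 1 + j) ` {..<\<gamma>+1-m})"
            by (simp add: sum.reindex)
          also have "\<dots> \<le> sum h {..n}"
            using m r0 by (intro sum_mono2) (auto simp: h_def gn)
          also have "\<dots> = fact \<gamma> * S" by (simp add: h_def S_def sum_distrib_left)
          finally show ?thesis .
        qed
        finally show ?thesis by simp
      qed
      also have "\<dots> \<le> fact \<gamma> * (A * (N1 + M * \<rho>^\<gamma>)) + M * \<rho>^\<gamma>"
        using Sb by (intro add_right_mono mult_left_mono) auto
      also have "\<dots> \<le> fact \<gamma> * (A * (N1 + N1)) + N1"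
        using MN A0 by (intro add_mono mult_left_mono) auto
      also have "\<dots> = Cm * N1" by (simp add: Cm_def algebra_simps)
      finally have key: "\<rho>^(m-1) * norm (D m \<rho> \<mu>) \<le> Cm * N1" .
      have pw: "\<rho> powr (1 - real m) = inverse (\<rho>^(m-1))"
      proof -
        have "\<rho> powr (1 - real m) = inverse (\<rho> powr (real (m - 1)))"
          using m by (simp add: powr_minus[symmetric] of_nat_diff)
        then show ?thesis using r0 by (simp add: powr_realpow)
      qed
      show "norm (D m \<rho> \<mu>) \<le> Cm * \<rho> powr (1 - real m) * norm (D 1 \<rho> \<mu>)"
        using key r0 unfolding pw N1_def by (simp add: field_simps)
    qed
  qed
qed

end
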